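(* Let $G$ be an $n\times n$ bimatrix game with payoff matrices $R,C\in[0,1]^{n\times n}$, and let $\epsilon,\Delta\ge 0$. Then $G$ satisfies the well-supported $(2\epsilon,\Delta)$-approximation stability condition if and only if $G$ satisfies the $(\epsilon,\Delta)$-stability to perturbations condition.
   Context: The row player receives $R_{i,j}$ and the column player $C_{i,j}$ when row plays $i$ and column plays $j$. Mixed strategies $p,q$ are probability vectors in $\mathbb{R}^n$; payoffs are $p^TRq$ and $p^TCq$; $e_i$ denotes the $i$-th unit vector; $\mathrm{supp}(p)=\{i:p_i>0\}$. $(p,q)$ is a Nash equilibrium if $e_i^TRq\le p^TRq$ and $p^TCe_j\le p^TCq$ for all $i,j$. $(p,q)$ is a well-supported $\epsilon$-equilibrium if for every $i\in\mathrm{supp}(p)$ and every $j$, $e_i^TRq\ge e_j^TRq-\epsilon$, and for every $i\in\mathrm{supp}(q)$ and every $j$, $p^TCe_i\ge p^TCe_j-\epsilon$. The distance is $d(p,p')=\frac12\sum_i|p_i-p'_i|$ and $d((p,q),(p',q'))=\max(d(p,p'),d(q,q'))$; $(p,q)$ is $\Delta$-close to $(p',q')$ if this distance is at most $\Delta$. A game $G'$ with matrices $R',C'$ is an $L_\infty$ $\alpha$-perturbation of $G$ if $|R_{i,j}-R'_{i,j}|\le\alpha$ and $|C_{i,j}-C'_{i,j}|\le\alpha$ for all $i,j$ (entries of $G'$ need not lie in $[0,1]$). $G$ satisfies the $(\epsilon,\Delta)$-stability to perturbations condition if for every $L_\infty$ $\epsilon$-perturbation $G'$ of $G$ and every Nash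 equilibrium $(p,q)$ of $G'$ there is a Nash equilibrium of $G$ that is $\Delta$-close to $(p,q)$. $G$ satisfies the well-supported $(\epsilon,\Delta)$-approximation stability condition if every well-supported $\epsilon$-equilibrium of $G$ is $\Delta$-close to some Nash equilibrium of $G$. *)

theory Defs
  imports "HOL-Analysis.Analysis"
begin

type_synonym mat = "nat \<Rightarrow> nat \<Rightarrow> real"
type_synonym strat = "nat \<Rightarrow> real"

definition is_strategy :: "nat \<Rightarrow> strat \<Rightarrow> bool" where
  "is_strategy n p \<longleftrightarrow> (\<forall>i<n. p i \<ge> 0) \<and> (\<forall>i\<ge>n. p i = 0) \<and> (\<Sum>i<n. p i) = 1"

definition supp :: "nat \<Rightarrow> strat \<Rightarrow> nat set" where
  "supp n p = {i. i < n \<and> p i > 0}"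

definition payoff :: "nat \<Rightarrow> mat \<Rightarrow> strat \<Rightarrow> strat \<Rightarrow> real" where
  "payoff n A p q = (\<Sum>i<n. \<Sum>j<n. p i * A i j * q j)"

definition row_payoff :: "nat \<Rightarrow> mat \<Rightarrow> nat \<Rightarrow> strat \<Rightarrow> real" where
  "row_payoff n A i q = (\<Sum>j<n. A i j * q j)"

definition col_payoff :: "nat \<Rightarrow> mat \<Rightarrow> strat \<Rightarrow> nat \<Rightarrow> real" where
  "col_payoff n A p j = (\<Sum>i<n. p i * A i j)"

definition nash_eq :: "nat \<Rightarrow> mat \<Rightarrow> mat \<Rightarrow> strat \<Rightarrow> strat \<Rightarrow> bool" where
  "nash_eq n R C p q \<longleftrightarrow> is_strategy n p \<and> is_strategy n q \<and>
     (\<forall>i<n. row_payoff n R i q \<le> payoff n R p q) \<and>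
     (\<forall>j<n. col_payoff n C p j \<le> payoff n C p q)"

definition ws_approx_eq :: "nat \<Rightarrow> mat \<Rightarrow> mat \<Rightarrow> real \<Rightarrow> strat \<Rightarrow> strat \<Rightarrow> bool" where
  "ws_approx_eq n R C \<epsilon> p q \<longleftrightarrow> is_strategy n p \<and> is_strategy n q \<and>
     (\<forall>i\<in>supp n p. \<forall>j<n. row_payoff n R i q \<ge> row_payoff n R j q - \<epsilon>) \<and>
     (\<forall>i\<in>supp n q. \<forall>j<n. col_payoff n C p i \<ge> col_payoff n C p j - \<epsilon>)"

definition sdist :: "nat \<Rightarrow> strat \<Rightarrow> strat \<Rightarrow> real" where
  "sdist n p p' = (1/2) * (\<Sum>i<n. \<bar>p i - p' i\<bar>)"

definition pdist :: "nat \<Rightarrow> strat \<times> strat \<Rightarrow> strat \<times> strat \<Rightarrow> real" where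
  "pdist n pq pq' = max (sdist n (fst pq) (fst pq')) (sdist n (snd pq) (snd pq'))"

definition delta_close :: "nat \<Rightarrow> real \<Rightarrow> strat \<times> strat \<Rightarrow> strat \<times> strat \<Rightarrow> bool" where
  "delta_close n \<Delta> pq pq' \<longleftrightarrow> pdist n pq pq' \<le> \<Delta>"

(* G' = (R',C') is an L_infinity alpha-perturbation of G = (R,C); entries of G' are arbitrary reals *)
definition linf_perturbation :: "nat \<Rightarrow> real \<Rightarrow> mat \<Rightarrow> mat \<Rightarrow> mat \<Rightarrow> mat \<Rightarrow> bool" where
  "linf_perturbation n \<alpha> R C R' C' \<longleftrightarrow>
     (\<forall>i<n. \<forall>j<n. \<bar>R i j - R' i j\<bar> \<le> \<alpha> \<and> \<bar>C i j - C' i j\<bar> \<le> \<alpha>)"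

definition stable_to_perturbations :: "nat \<Rightarrow> mat \<Rightarrow> mat \<Rightarrow> real \<Rightarrow> real \<Rightarrow> bool" where
  "stable_to_perturbations n R C \<epsilon> \<Delta> \<longleftrightarrow>
     (\<forall>R' C'. linf_perturbation n \<epsilon> R C R' C' \<longrightarrow>
        (\<forall>p q. nash_eq n R' C' p q \<longrightarrow>
           (\<exists>p' q'. nash_eq n R C p' q' \<and> delta_close n \<Delta> (p', q') (p, q))))"

definition ws_approx_stable :: "nat \<Rightarrow> mat \<Rightarrow> mat \<Rightarrow> real \<Rightarrow> real \<Rightarrow> bool" where
  "ws_approx_stable n R C \<epsilon> \<Delta> \<longleftrightarrow>
     (\<forall>p q. ws_approx_eq n R C \<epsilon> p q \<longrightarrow>
        (\<exists>p' q'. nash_eq n R C p' q' \<and> delta_close n \<Delta> (p, q) (p', q')))"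

end

theory Submission
  imports Defs
begin

lemma supp_best:
  fixes r p :: "nat \<Rightarrow> real"
  assumes "is_strategy n p" "\<forall>k<n. r k \<le> (\<Sum>k<n. p k * r k)" "i < n" "p i > 0"
  shows "r i = (\<Sum>k<n. p k * r k)"
proof -
  let ?v = "\<Sum>k<n. p k * r k"
  have s: "(\<Sum>k<n. p k) = 1" and nn: "\<forall>k<n. p k \<ge> 0" using assms(1) unfolding is_strategy_def by auto
  have "(\<Sum>k<n. p k * (?v - r k)) = ?v * (\<Sum>k<n. p k) - ?v"
    by (simp add: right_diff_distrib sum_subtractf sum_distrib_right[symmetric] mult.commute)
  also have "\<dots> = 0" using s by simp
  finally have z: "(\<Sum>k<n. p k * (?v - r k)) = 0" .
  have "\<forall>k\<in>{..<n}. p k * (?v - r k) = 0"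
    using z sum_nonneg_eq_0_iff[of "{..<n}" "\<lambda>k. p k * (?v - r k)"] nn assms(2) by auto
  then have "p i * (?v - r i) = 0" using assms(3) by auto
  then show ?thesis using assms(4) by simp
qed

lemma payoff_rows: "payoff n A p q = (\<Sum>i<n. p i * row_payoff n A i q)"
  unfolding payoff_def row_payoff_def by (simp add: sum_distrib_left mult.assoc)

lemma payoff_cols: "payoff n A p q = (\<Sum>j<n. q j * col_payoff n A p j)"
  unfolding payoff_def col_payoff_def
  by (subst sum.swap) (simp add: sum_distrib_left sum_distrib_right algebra_simps)

lemma row_close:
  assumes "is_strategy n q" "\<forall>j<n. \<bar>R i j - R' i j\<bar> \<le> e"
  shows "\<bar>row_payoff n R i q - row_payoff n R' i q\<bar> \<le> e"
proof -
  have s: "(\<Sum>k<n. q k) = 1" and nn: "\<forall>k<n. q k \<ge> 0" using assms(1) unfolding is_strategy_def by auto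
  have "\<bar>row_payoff n R i q - row_payoff n R' i q\<bar> = \<bar>\<Sum>j<n. (R i j - R' i j) * q j\<bar>"
    unfolding row_payoff_def by (simp add: sum_subtractf algebra_simps)
  also have "\<dots> \<le> (\<Sum>j<n. \<bar>(R i j - R' i j) * q j\<bar>)" by (rule sum_abs)
  also have "\<dots> \<le> (\<Sum>j<n. e * q j)"
    by (rule sum_mono) (use assms(2) nn in \<open>auto simp: abs_mult intro: mult_right_mono\<close>)
  also have "\<dots> = e" using s by (simp add: sum_distrib_left[symmetric])
  finally show ?thesis .
qed

lemma col_close:
  assumes "is_strategy n p" "\<forall>i<n. \<bar>C i j - C' i j\<bar> \<le> e"
  shows "\<bar>col_payoff n C p j - col_payoff n C' p j\<bar> \<le> e"
proof -
  have s: "(\<Sum>k<n. p k) = 1" and nn: "\<forall>k<n. p k \<ge> 0" using assms(1) unfolding is_strategy_def by auto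
  have "\<bar>col_payoff n C p j - col_payoff n C' p j\<bar> = \<bar>\<Sum>i<n. (C i j - C' i j) * p i\<bar>"
    unfolding col_payoff_def by (simp add: sum_subtractf algebra_simps)
  also have "\<dots> \<le> (\<Sum>i<n. \<bar>(C i j - C' i j) * p i\<bar>)" by (rule sum_abs)
  also have "\<dots> \<le> (\<Sum>i<n. e * p i)"
    by (rule sum_mono) (use assms(2) nn in \<open>auto simp: abs_mult intro: mult_right_mono\<close>)
  also have "\<dots> = e" using s by (simp add: sum_distrib_left[symmetric])
  finally show ?thesis .
qed

lemma row_shift:
  assumes "is_strategy n q"
  shows "row_payoff n (\<lambda>i j. R i j + c i) i q = row_payoff n R i q + c i"
proof -
  have s: "(\<Sum>k<n. q k) = 1" using assms unfolding is_strategy_def by auto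
  show ?thesis unfolding row_payoff_def
    by (simp add: distrib_right sum.distrib sum_distrib_left[symmetric] s)
qed

lemma col_shift:
  assumes "is_strategy n p"
  shows "col_payoff n (\<lambda>i j. C i j + d j) p j = col_payoff n C p j + d j"
proof -
  have s: "(\<Sum>k<n. p k) = 1" using assms unfolding is_strategy_def by auto
  show ?thesis unfolding col_payoff_def
    by (simp add: distrib_left sum.distrib sum_distrib_right[symmetric] s)
qed

lemma pdist_sym: "pdist n a b = pdist n b a"
  unfolding pdist_def sdist_def by (simp add: abs_minus_commute)

lemma strat_n_pos: "is_strategy n p \<Longrightarrow> n > 0"
  unfolding is_strategy_def by (cases n) auto

theorem theorem1:
  fixes n :: nat and R C :: "nat \<Rightarrow> nat \<Rightarrow> real" and \<epsilon> \<Delta> :: real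
  assumes "\<forall>i<n. \<forall>j<n. 0 \<le> R i j \<and> R i j \<le> 1"
      and "\<forall>i<n. \<forall>j<n. 0 \<le> C i j \<and> C i j \<le> 1"
      and "\<epsilon> \<ge> 0" and "\<Delta> \<ge> 0"
  shows "ws_approx_stable n R C (2 * \<epsilon>) \<Delta> \<longleftrightarrow> stable_to_perturbations n R C \<epsilon> \<Delta>"
proof
  assume W: "ws_approx_stable n R C (2 * \<epsilon>) \<Delta>"
  show "stable_to_perturbations n R C \<epsilon> \<Delta>"
    unfolding stable_to_perturbations_def
  proof (intro allI impI)
    fix R' C' p q
    assume L: "linf_perturbation n \<epsilon> R C R' C'" and N: "nash_eq n R' C' p q"
    have sp: "is_strategy n p" and sq: "is_strategy n q" using N unfolding nash_eq_def by auto
    have rb: "\<forall>i<n. row_payoff n R' i q \<le> (\<Sum>k<n. p k * row_payoff n R' k q)"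
      using N unfolding nash_eq_def payoff_rows by auto
    have cb: "\<forall>j<n. col_payoff n C' p j \<le> (\<Sum>k<n. q k * col_payoff n C' p k)"
      using N unfolding nash_eq_def payoff_cols by auto
    have rc: "\<And>i. i < n \<Longrightarrow> \<bar>row_payoff n R i q - row_payoff n R' i q\<bar> \<le> \<epsilon>"
      using L sq row_close unfolding linf_perturbation_def by blast
    have cc: "\<And>j. j < n \<Longrightarrow> \<bar>col_payoff n C p j - col_payoff n C' p j\<bar> \<le> \<epsilon>"
      using L sp col_close unfolding linf_perturbation_def by blast
    have "ws_approx_eq n R C (2 * \<epsilon>) p q"
      unfolding ws_approx_eq_def
    proof (intro conjI sp sq ballI allI impI)
      fix i j assume i: "i \<in> supp n p" and j: "j < n"
      have "row_payoff n R' i q = (\<Sum>k<n. p k * row_payoff n R' k q)"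
        using supp_best[OF sp rb] i unfolding supp_def by auto
      then have "row_payoff n R' j q \<le> row_payoff n R' i q" using rb j by auto
      moreover have "i < n" using i unfolding supp_def by auto
      ultimately show "row_payoff n R j q - 2 * \<epsilon> \<le> row_payoff n R i q"
        using rc[of i] rc[of j] j by linarith
    next
      fix i j assume i: "i \<in> supp n q" and j: "j < n"
      have "col_payoff n C' p i = (\<Sum>k<n. q k * col_payoff n C' p k)"
        using supp_best[OF sq cb] i unfolding supp_def by auto
      then have "col_payoff n C' p j \<le> col_payoff n C' p i" using cb j by auto
      moreover have "i < n" using i unfolding supp_def by auto
      ultimately show "col_payoff n C p j - 2 * \<epsilon> \<le> col_payoff n C p i"
        using cc[of i] cc[of j] j by linarith
    qed
    then obtain p' q' where "nash_eq n R C p' q'" "delta_close n \<Delta> (p, q) (p', q')"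
      using W unfolding ws_approx_stable_def by blast
    then show "\<exists>p' q'. nash_eq n R C p' q' \<and> delta_close n \<Delta> (p', q') (p, q)"
      unfolding delta_close_def using pdist_sym by metis
  qed
next
  assume S: "stable_to_perturbations n R C \<epsilon> \<Delta>"
  show "ws_approx_stable n R C (2 * \<epsilon>) \<Delta>"
    unfolding ws_approx_stable_def
  proof (intro allI impI)
    fix p q assume A: "ws_approx_eq n R C (2 * \<epsilon>) p q"
    have sp: "is_strategy n p" and sq: "is_strategy n q" using A unfolding ws_approx_eq_def by auto
    have np: "n > 0" using strat_n_pos[OF sp] .
    define M where "M = Max ((\<lambda>i. row_payoff n R i q) ` {..<n})"
    define Mc where "Mc = Max ((\<lambda>j. col_payoff n C p j) ` {..<n})"
    have Mge: "\<And>i. i < n \<Longrightarrow> row_payoff n R i q \<le> M" unfolding M_def by simp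
    have Mcge: "\<And>j. j < n \<Longrightarrow> col_payoff n C p j \<le> Mc" unfolding Mc_def by simp
    obtain i0 where i0: "i0 < n" "M = row_payoff n R i0 q"
      unfolding M_def using np Max_in[of "(\<lambda>i. row_payoff n R i q) ` {..<n}"] by fastforce
    obtain j0 where j0: "j0 < n" "Mc = col_payoff n C p j0"
      unfolding Mc_def using np Max_in[of "(\<lambda>j. col_payoff n C p j) ` {..<n}"] by fastforce
    define c where "c i = min \<epsilon> (M - \<epsilon> - row_payoff n R i q)" for i
    define d where "d j = min \<epsilon> (Mc - \<epsilon> - col_payoff n C p j)" for j
    define R' where "R' = (\<lambda>i j. R i j + c i)"
    define C' where "C' = (\<lambda>i j. C i j + d j)"
    have Rsh: "\<And>i. row_payoff n R' i q = row_payoff n R i q + c i"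
      unfolding R'_def using row_shift[OF sq] .
    have Csh: "\<And>j. col_payoff n C' p j = col_payoff n C p j + d j"
      unfolding C'_def using col_shift[OF sp] .
    have L: "linf_perturbation n \<epsilon> R C R' C'"
      unfolding linf_perturbation_def R'_def C'_def c_def d_def
      using Mge Mcge assms(3) by (auto simp: abs_le_iff min_def)
    have rs: "\<And>i. i \<in> supp n p \<Longrightarrow> row_payoff n R' i q = M - \<epsilon>"
    proof -
      fix i assume i: "i \<in> supp n p"
      have "row_payoff n R i0 q - 2 * \<epsilon> \<le> row_payoff n R i q"
        using A i i0 unfolding ws_approx_eq_def by blast
      then show "row_payoff n R' i q = M - \<epsilon>" using i0 Rsh[of i] unfolding c_def by auto
    qed
    have cs: "\<And>j. j \<in> supp n q \<Longrightarrow> col_payoff n C' p j = Mc - \<epsilon>"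
    proof -
      fix j assume j: "j \<in> supp n q"
      have "col_payoff n C p j0 - 2 * \<epsilon> \<le> col_payoff n C p j"
        using A j j0 unfolding ws_approx_eq_def by blast
      then show "col_payoff n C' p j = Mc - \<epsilon>" using j0 Csh[of j] unfolding d_def by auto
    qed
    have rle: "\<And>i. row_payoff n R' i q \<le> M - \<epsilon>" using Rsh unfolding c_def by auto
    have cle: "\<And>j. col_payoff n C' p j \<le> Mc - \<epsilon>" using Csh unfolding d_def by auto
    have pR: "payoff n R' p q = M - \<epsilon>"
    proof -
      have "payoff n R' p q = (\<Sum>i<n. p i * (M - \<epsilon>))"
        unfolding payoff_rows
      proof (rule sum.cong[OF refl])
        fix i assume "i \<in> {..<n}"
        then show "p i * row_payoff n R' i q = p i * (M - \<epsilon>)"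
          using rs[of i] sp unfolding supp_def is_strategy_def by (cases "p i > 0") auto
      qed
      also have "\<dots> = M - \<epsilon>" using sp unfolding is_strategy_def by (simp add: sum_distrib_right[symmetric])
      finally show ?thesis .
    qed
    have pC: "payoff n C' p q = Mc - \<epsilon>"
    proof -
      have "payoff n C' p q = (\<Sum>j<n. q j * (Mc - \<epsilon>))"
        unfolding payoff_cols
      proof (rule sum.cong[OF refl])
        fix j assume "j \<in> {..<n}"
        then show "q j * col_payoff n C' p j = q j * (Mc - \<epsilon>)"
          using cs[of j] sq unfolding supp_def is_strategy_def by (cases "q j > 0") auto
      qed
      also have "\<dots> = Mc - \<epsilon>" using sq unfolding is_strategy_def by (simp add: sum_distrib_right[symmetric])
      finally show ?thesis .
    qed
    have N: "nash_eq n R' C' p q"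
      unfolding nash_eq_def using sp sq rle cle pR pC by auto
    then obtain p' q' where "nash_eq n R C p' q'" "delta_close n \<Delta> (p', q') (p, q)"
      using S L unfolding stable_to_perturbations_def by blast
    then show "\<exists>p' q'. nash_eq n R C p' q' \<and> delta_close n \<Delta> (p, q) (p', q')"
      unfolding delta_close_def using pdist_sym by metis
  qed
qed

end
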